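(* Let $F\colon\mathcal M\to\mathcal N$ be a (symmetric) monoidal functor between (symmetric) monoidal categories. If $\mathcal N$ is purely monoidal, then the set $\Theta(F)$ has at most one element. If in addition $\mathcal M$ is a 2-group, then $\Theta(F)$ has exactly one element.
   Context: Monoidal functors are strong monoidal. For a monoidal functor $F\colon\mathcal M\to\mathcal N$, $\Theta(F)$ denotes the set of monoidal natural isomorphisms $F\Rightarrow \Delta_{I_{\mathcal N}}$, where $\Delta_{I_{\mathcal N}}\colon\mathcal M\to\mathcal N$ is the constant (monoidal) functor at the unit object $I_{\mathcal N}$. An object $A$ of a monoidal category is weakly invertible if there is $B$ with $A\otimes B\cong B\otimes A\cong I$. A 2-group is a monoidal category which is a groupoid and in which every object is weakly invertible. A monoidal category is purely monoidal (pure) if for every pair of weakly invertible objects there is exactly one isomorphism between them. *)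

theory Defs
  imports "HOL-Library.FuncSet"
begin

record ('o,'m) cat =
  Obj :: "'o set"
  Hom :: "'o \<Rightarrow> 'o \<Rightarrow> 'm set"
  Id :: "'o \<Rightarrow> 'm"
  Comp :: "'m \<Rightarrow> 'm \<Rightarrow> 'm"   (* Comp C g f = g \<circ> f *)

definition category :: "('o,'m,'z) cat_scheme \<Rightarrow> bool" where
  "category C \<longleftrightarrow>
     (\<forall>a b. (a \<notin> Obj C \<or> b \<notin> Obj C) \<longrightarrow> Hom C a b = {}) \<and>
     (\<forall>a\<in>Obj C. Id C a \<in> Hom C a a) \<and>
     (\<forall>a b c f g. f \<in> Hom C a b \<and> g \<in> Hom C b c \<longrightarrow> Comp C g f \<in> Hom C a c) \<and>
     (\<forall>a b f. f \<in> Hom C a b \<longrightarrow> Comp C f (Id C a) = f \<and> Comp C (Id C b) f = f) \<and>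
     (\<forall>a b c d f g h. f \<in> Hom C a b \<and> g \<in> Hom C b c \<and> h \<in> Hom C c d \<longrightarrow>
        Comp C h (Comp C g f) = Comp C (Comp C h g) f)"

definition iso_in :: "('o,'m,'z) cat_scheme \<Rightarrow> 'o \<Rightarrow> 'o \<Rightarrow> 'm \<Rightarrow> bool" where
  "iso_in C a b f \<longleftrightarrow> f \<in> Hom C a b \<and>
     (\<exists>g\<in>Hom C b a. Comp C g f = Id C a \<and> Comp C f g = Id C b)"

definition isomorphic :: "('o,'m,'z) cat_scheme \<Rightarrow> 'o \<Rightarrow> 'o \<Rightarrow> bool" where
  "isomorphic C a b \<longleftrightarrow> (\<exists>f. iso_in C a b f)"

definition groupoid :: "('o,'m,'z) cat_scheme \<Rightarrow> bool" where
  "groupoid C \<longleftrightarrow> (\<forall>a\<in>Obj C. \<forall>b\<in>Obj C. \<forall>f\<in>Hom C a b. iso_in C a b f)"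

record ('o,'m) moncat = "('o,'m) cat" +
  Tens :: "'o \<Rightarrow> 'o \<Rightarrow> 'o"
  TensM :: "'m \<Rightarrow> 'm \<Rightarrow> 'm"
  Unit :: 'o
  Alpha :: "'o \<Rightarrow> 'o \<Rightarrow> 'o \<Rightarrow> 'm"
  Lam :: "'o \<Rightarrow> 'm"
  Rho :: "'o \<Rightarrow> 'm"

definition monoidal_cat :: "('o,'m) moncat \<Rightarrow> bool" where
  "monoidal_cat M \<longleftrightarrow> category M \<and>
     Unit M \<in> Obj M \<and>
     (\<forall>a\<in>Obj M. \<forall>b\<in>Obj M. Tens M a b \<in> Obj M) \<and>
     (\<forall>a b a' b' f g. f \<in> Hom M a a' \<and> g \<in> Hom M b b' \<longrightarrow>
        TensM M f g \<in> Hom M (Tens M a b) (Tens M a' b')) \<and>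
     (\<forall>a\<in>Obj M. \<forall>b\<in>Obj M. TensM M (Id M a) (Id M b) = Id M (Tens M a b)) \<and>
     (\<forall>a b c a' b' c' f g f' g'. f \<in> Hom M a b \<and> g \<in> Hom M b c \<and>
        f' \<in> Hom M a' b' \<and> g' \<in> Hom M b' c' \<longrightarrow>
        TensM M (Comp M g f) (Comp M g' f') = Comp M (TensM M g g') (TensM M f f')) \<and>
     (\<forall>a\<in>Obj M. \<forall>b\<in>Obj M. \<forall>c\<in>Obj M.
        iso_in M (Tens M (Tens M a b) c) (Tens M a (Tens M b c)) (Alpha M a b c)) \<and>
     (\<forall>a\<in>Obj M. iso_in M (Tens M (Unit M) a) a (Lam M a)) \<and>
     (\<forall>a\<in>Obj M. iso_in M (Tens M a (Unit M)) a (Rho M a)) \<and>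
     (\<forall>a b c a' b' c' f g h. f \<in> Hom M a a' \<and> g \<in> Hom M b b' \<and> h \<in> Hom M c c' \<longrightarrow>
        Comp M (Alpha M a' b' c') (TensM M (TensM M f g) h) =
        Comp M (TensM M f (TensM M g h)) (Alpha M a b c)) \<and>
     (\<forall>a a' f. f \<in> Hom M a a' \<longrightarrow>
        Comp M (Lam M a') (TensM M (Id M (Unit M)) f) = Comp M f (Lam M a)) \<and>
     (\<forall>a a' f. f \<in> Hom M a a' \<longrightarrow>
        Comp M (Rho M a') (TensM M f (Id M (Unit M))) = Comp M f (Rho M a)) \<and>
     (\<forall>a\<in>Obj M. \<forall>b\<in>Obj M. \<forall>c\<in>Obj M. \<forall>d\<in>Obj M.
        Comp M (Alpha M a b (Tens M c d)) (Alpha M (Tens M a b) c d) =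
        Comp M (TensM M (Id M a) (Alpha M b c d))
          (Comp M (Alpha M a (Tens M b c) d) (TensM M (Alpha M a b c) (Id M d)))) \<and>
     (\<forall>a\<in>Obj M. \<forall>b\<in>Obj M.
        Comp M (TensM M (Id M a) (Lam M b)) (Alpha M a (Unit M) b) =
        TensM M (Rho M a) (Id M b))"

definition weakly_invertible :: "('o,'m) moncat \<Rightarrow> 'o \<Rightarrow> bool" where
  "weakly_invertible M a \<longleftrightarrow> a \<in> Obj M \<and>
     (\<exists>b\<in>Obj M. isomorphic M (Tens M a b) (Unit M) \<and> isomorphic M (Tens M b a) (Unit M))"

definition two_group :: "('o,'m) moncat \<Rightarrow> bool" where
  "two_group M \<longleftrightarrow> monoidal_cat M \<and> groupoid M \<and> (\<forall>a\<in>Obj M. weakly_invertible M a)"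

definition purely_monoidal :: "('o,'m) moncat \<Rightarrow> bool" where
  "purely_monoidal M \<longleftrightarrow>
     (\<forall>a b. weakly_invertible M a \<and> weakly_invertible M b \<longrightarrow> (\<exists>!f. iso_in M a b f))"

record ('o,'m,'p,'n) monfun =
  FO :: "'o \<Rightarrow> 'p"
  FM :: "'m \<Rightarrow> 'n"
  Phi :: "'o \<Rightarrow> 'o \<Rightarrow> 'n"
  Phi0 :: "'n"

definition monoidal_functor ::
  "('o,'m) moncat \<Rightarrow> ('p,'n) moncat \<Rightarrow> ('o,'m,'p,'n) monfun \<Rightarrow> bool" where
  "monoidal_functor M N F \<longleftrightarrow>
     (\<forall>a\<in>Obj M. FO F a \<in> Obj N) \<and>
     (\<forall>a b f. f \<in> Hom M a b \<longrightarrow> FM F f \<in> Hom N (FO F a) (FO F b)) \<and>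
     (\<forall>a\<in>Obj M. FM F (Id M a) = Id N (FO F a)) \<and>
     (\<forall>a b c f g. f \<in> Hom M a b \<and> g \<in> Hom M b c \<longrightarrow>
        FM F (Comp M g f) = Comp N (FM F g) (FM F f)) \<and>
     (\<forall>a\<in>Obj M. \<forall>b\<in>Obj M.
        iso_in N (Tens N (FO F a) (FO F b)) (FO F (Tens M a b)) (Phi F a b)) \<and>
     iso_in N (Unit N) (FO F (Unit M)) (Phi0 F) \<and>
     (\<forall>a b a' b' f g. f \<in> Hom M a a' \<and> g \<in> Hom M b b' \<longrightarrow>
        Comp N (Phi F a' b') (TensM N (FM F f) (FM F g)) =
        Comp N (FM F (TensM M f g)) (Phi F a b)) \<and>
     (\<forall>a\<in>Obj M. \<forall>b\<in>Obj M. \<forall>c\<in>Obj M.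
        Comp N (FM F (Alpha M a b c))
          (Comp N (Phi F (Tens M a b) c) (TensM N (Phi F a b) (Id N (FO F c)))) =
        Comp N (Phi F a (Tens M b c))
          (Comp N (TensM N (Id N (FO F a)) (Phi F b c)) (Alpha N (FO F a) (FO F b) (FO F c)))) \<and>
     (\<forall>a\<in>Obj M.
        Comp N (FM F (Lam M a))
          (Comp N (Phi F (Unit M) a) (TensM N (Phi0 F) (Id N (FO F a)))) = Lam N (FO F a)) \<and>
     (\<forall>a\<in>Obj M.
        Comp N (FM F (Rho M a))
          (Comp N (Phi F a (Unit M)) (TensM N (Id N (FO F a)) (Phi0 F))) = Rho N (FO F a))"

definition const_unit_functor :: "('p,'n) moncat \<Rightarrow> ('o,'m,'p,'n) monfun" where
  "const_unit_functor N =
     \<lparr>FO = (\<lambda>_. Unit N), FM = (\<lambda>_. Id N (Unit N)),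
      Phi = (\<lambda>_ _. Lam N (Unit N)), Phi0 = Id N (Unit N)\<rparr>"

definition monoidal_nat_iso ::
  "('o,'m) moncat \<Rightarrow> ('p,'n) moncat \<Rightarrow> ('o,'m,'p,'n) monfun \<Rightarrow> ('o,'m,'p,'n) monfun
     \<Rightarrow> ('o \<Rightarrow> 'n) \<Rightarrow> bool" where
  "monoidal_nat_iso M N F G \<theta> \<longleftrightarrow>
     \<theta> \<in> extensional (Obj M) \<and>
     (\<forall>a\<in>Obj M. iso_in N (FO F a) (FO G a) (\<theta> a)) \<and>
     (\<forall>a b f. f \<in> Hom M a b \<longrightarrow> Comp N (\<theta> b) (FM F f) = Comp N (FM G f) (\<theta> a)) \<and>
     (\<forall>a\<in>Obj M. \<forall>b\<in>Obj M.
        Comp N (\<theta> (Tens M a b)) (Phi F a b) = Comp N (Phi G a b) (TensM N (\<theta> a) (\<theta> b))) \<and>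
     Comp N (\<theta> (Unit M)) (Phi0 F) = Phi0 G"

definition Theta ::
  "('o,'m) moncat \<Rightarrow> ('p,'n) moncat \<Rightarrow> ('o,'m,'p,'n) monfun \<Rightarrow> ('o \<Rightarrow> 'n) set" where
  "Theta M N F = {\<theta>. monoidal_nat_iso M N F (const_unit_functor N) \<theta>}"

end

theory Submission
  imports Defs
begin

lemma cat_facts:
  assumes "category C"
  shows "\<And>a b f. f \<in> Hom C a b \<Longrightarrow> a \<in> Obj C \<and> b \<in> Obj C"
    and "\<And>a. a \<in> Obj C \<Longrightarrow> Id C a \<in> Hom C a a"
    and "\<And>a b c f g. f \<in> Hom C a b \<Longrightarrow> g \<in> Hom C b c \<Longrightarrow> Comp C g f \<in> Hom C a c"
    and "\<And>a b f. f \<in> Hom C a b \<Longrightarrow> Comp C f (Id C a) = f"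
    and "\<And>a b f. f \<in> Hom C a b \<Longrightarrow> Comp C (Id C b) f = f"
    and "\<And>a b c d f g h. f \<in> Hom C a b \<Longrightarrow> g \<in> Hom C b c \<Longrightarrow> h \<in> Hom C c d \<Longrightarrow>
        Comp C h (Comp C g f) = Comp C (Comp C h g) f"
  using assms unfolding category_def
  apply -
  apply (elim conjE, blast)+
  done

lemma iso_id:
  assumes "category C" "a \<in> Obj C"
  shows "iso_in C a a (Id C a)"
  unfolding iso_in_def using cat_facts[OF assms(1)] assms(2) by metis

lemma iso_comp:
  assumes C: "category C" and f: "iso_in C a b f" and g: "iso_in C b c g"
  shows "iso_in C a c (Comp C g f)"
proof -
  from f obtain f' where f1: "f \<in> Hom C a b" "f' \<in> Hom C b a" "Comp C f' f = Id C a" "Comp C f f' = Id C b"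
    unfolding iso_in_def by blast
  from g obtain g' where g1: "g \<in> Hom C b c" "g' \<in> Hom C c b" "Comp C g' g = Id C b" "Comp C g g' = Id C c"
    unfolding iso_in_def by blast
  note cf = cat_facts[OF C]
  have h1: "Comp C g f \<in> Hom C a c" using cf(3) f1 g1 by blast
  have h2: "Comp C f' g' \<in> Hom C c a" using cf(3) f1 g1 by blast
  have "Comp C (Comp C f' g') (Comp C g f) = Comp C f' (Comp C g' (Comp C g f))"
    using cf(6)[of "Comp C g f" a c g' b f' a] h1 f1 g1 by simp
  also have "Comp C g' (Comp C g f) = Comp C (Comp C g' g) f" using cf(6) f1 g1 by blast
  also have "\<dots> = f" using g1 f1 cf(5) by simp
  finally have e1: "Comp C (Comp C f' g') (Comp C g f) = Id C a" using f1 by simp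
  have "Comp C (Comp C g f) (Comp C f' g') = Comp C g (Comp C f (Comp C f' g'))"
    using cf(6)[of "Comp C f' g'" c a f b g c] h2 f1 g1 by simp
  also have "Comp C f (Comp C f' g') = Comp C (Comp C f f') g'" using cf(6) f1 g1 by blast
  also have "\<dots> = g'" using g1 f1 cf(5) by simp
  finally have e2: "Comp C (Comp C g f) (Comp C f' g') = Id C c" using g1 by simp
  show ?thesis unfolding iso_in_def using h1 h2 e1 e2 by blast
qed

lemma iso_inv:
  assumes "iso_in C a b f" shows "\<exists>g. iso_in C b a g"
  using assms unfolding iso_in_def by blast

lemma iso_hom: "iso_in C a b f \<Longrightarrow> f \<in> Hom C a b"
  unfolding iso_in_def by blast

lemma iso_obj: "category C \<Longrightarrow> iso_in C a b f \<Longrightarrow> a \<in> Obj C \<and> b \<in> Obj C"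
  using cat_facts(1) iso_hom by metis

lemma mon_all:
  assumes "monoidal_cat M"
  shows "category M" "Unit M \<in> Obj M"
    "\<forall>a\<in>Obj M. \<forall>b\<in>Obj M. Tens M a b \<in> Obj M"
    "\<forall>a b a' b' f g. f \<in> Hom M a a' \<and> g \<in> Hom M b b' \<longrightarrow>
        TensM M f g \<in> Hom M (Tens M a b) (Tens M a' b')"
    "\<forall>a\<in>Obj M. \<forall>b\<in>Obj M. TensM M (Id M a) (Id M b) = Id M (Tens M a b)"
    "\<forall>a b c a' b' c' f g f' g'. f \<in> Hom M a b \<and> g \<in> Hom M b c \<and>
        f' \<in> Hom M a' b' \<and> g' \<in> Hom M b' c' \<longrightarrow>
        TensM M (Comp M g f) (Comp M g' f') = Comp M (TensM M g g') (TensM M f f')"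
    "\<forall>a\<in>Obj M. iso_in M (Tens M (Unit M) a) a (Lam M a)"
    "\<forall>a\<in>Obj M. iso_in M (Tens M a (Unit M)) a (Rho M a)"
  using assms unfolding monoidal_cat_def
  apply -
  apply (elim conjE; assumption)+
  done

lemma mon_facts:
  assumes "monoidal_cat M"
  shows "category M" "Unit M \<in> Obj M"
    "\<And>a b. a \<in> Obj M \<Longrightarrow> b \<in> Obj M \<Longrightarrow> Tens M a b \<in> Obj M"
    "\<And>a b a' b' f g. f \<in> Hom M a a' \<Longrightarrow> g \<in> Hom M b b' \<Longrightarrow>
        TensM M f g \<in> Hom M (Tens M a b) (Tens M a' b')"
    "\<And>a b. a\<in>Obj M \<Longrightarrow> b\<in>Obj M \<Longrightarrow> TensM M (Id M a) (Id M b) = Id M (Tens M a b)"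
    "\<And>a b c a' b' c' f g f' g'. f \<in> Hom M a b \<Longrightarrow> g \<in> Hom M b c \<Longrightarrow>
        f' \<in> Hom M a' b' \<Longrightarrow> g' \<in> Hom M b' c' \<Longrightarrow>
        TensM M (Comp M g f) (Comp M g' f') = Comp M (TensM M g g') (TensM M f f')"
    "\<And>a. a\<in>Obj M \<Longrightarrow> iso_in M (Tens M (Unit M) a) a (Lam M a)"
    "\<And>a. a\<in>Obj M \<Longrightarrow> iso_in M (Tens M a (Unit M)) a (Rho M a)"
proof -
  note h = mon_all[OF assms]
  show "category M" by (rule h(1))
  show "Unit M \<in> Obj M" by (rule h(2))
  show "\<And>a b. a \<in> Obj M \<Longrightarrow> b \<in> Obj M \<Longrightarrow> Tens M a b \<in> Obj M" using h(3) by blast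
  show "\<And>a b a' b' f g. f \<in> Hom M a a' \<Longrightarrow> g \<in> Hom M b b' \<Longrightarrow>
        TensM M f g \<in> Hom M (Tens M a b) (Tens M a' b')" using h(4) by blast
  show "\<And>a b. a\<in>Obj M \<Longrightarrow> b\<in>Obj M \<Longrightarrow> TensM M (Id M a) (Id M b) = Id M (Tens M a b)" using h(5) by blast
  show "\<And>a b c a' b' c' f g f' g'. f \<in> Hom M a b \<Longrightarrow> g \<in> Hom M b c \<Longrightarrow>
        f' \<in> Hom M a' b' \<Longrightarrow> g' \<in> Hom M b' c' \<Longrightarrow>
        TensM M (Comp M g f) (Comp M g' f') = Comp M (TensM M g g') (TensM M f f')" using h(6) by blast
  show "\<And>a. a\<in>Obj M \<Longrightarrow> iso_in M (Tens M (Unit M) a) a (Lam M a)" using h(7) by blast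
  show "\<And>a. a\<in>Obj M \<Longrightarrow> iso_in M (Tens M a (Unit M)) a (Rho M a)" using h(8) by blast
qed

lemma iso_tens:
  assumes M: "monoidal_cat M" and f: "iso_in M a a' f" and g: "iso_in M b b' g"
  shows "iso_in M (Tens M a b) (Tens M a' b') (TensM M f g)"
proof -
  note mf = mon_facts[OF M]
  note cf = cat_facts[OF mf(1)]
  from f obtain f' where f1: "f \<in> Hom M a a'" "f' \<in> Hom M a' a" "Comp M f' f = Id M a" "Comp M f f' = Id M a'"
    unfolding iso_in_def by blast
  from g obtain g' where g1: "g \<in> Hom M b b'" "g' \<in> Hom M b' b" "Comp M g' g = Id M b" "Comp M g g' = Id M b'"
    unfolding iso_in_def by blast
  have oa: "a \<in> Obj M" "a' \<in> Obj M" using cf(1)[OF f1(1)] by auto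
  have ob: "b \<in> Obj M" "b' \<in> Obj M" using cf(1)[OF g1(1)] by auto
  have "Comp M (TensM M f' g') (TensM M f g) = TensM M (Comp M f' f) (Comp M g' g)"
    using mf(6)[OF f1(1) f1(2) g1(1) g1(2)] by simp
  also have "\<dots> = Id M (Tens M a b)" using f1(3) g1(3) mf(5)[OF oa(1) ob(1)] by simp
  finally have e1: "Comp M (TensM M f' g') (TensM M f g) = Id M (Tens M a b)" .
  have "Comp M (TensM M f g) (TensM M f' g') = TensM M (Comp M f f') (Comp M g g')"
    using mf(6)[OF f1(2) f1(1) g1(2) g1(1)] by simp
  also have "\<dots> = Id M (Tens M a' b')" using f1(4) g1(4) mf(5)[OF oa(2) ob(2)] by simp
  finally have e2: "Comp M (TensM M f g) (TensM M f' g') = Id M (Tens M a' b')" .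
  show ?thesis unfolding iso_in_def using e1 e2 mf(4)[OF f1(1) g1(1)] mf(4)[OF f1(2) g1(2)] by blast
qed

lemma fun_all:
  assumes "monoidal_functor M N F"
  shows "\<forall>a\<in>Obj M. FO F a \<in> Obj N"
    "\<forall>a b f. f \<in> Hom M a b \<longrightarrow> FM F f \<in> Hom N (FO F a) (FO F b)"
    "\<forall>a\<in>Obj M. FM F (Id M a) = Id N (FO F a)"
    "\<forall>a b c f g. f \<in> Hom M a b \<and> g \<in> Hom M b c \<longrightarrow>
        FM F (Comp M g f) = Comp N (FM F g) (FM F f)"
    "\<forall>a\<in>Obj M. \<forall>b\<in>Obj M.
        iso_in N (Tens N (FO F a) (FO F b)) (FO F (Tens M a b)) (Phi F a b)"
    "iso_in N (Unit N) (FO F (Unit M)) (Phi0 F)"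
  using assms unfolding monoidal_functor_def
  apply -
  apply (elim conjE; assumption)+
  done

lemma fun_facts:
  assumes "monoidal_functor M N F"
  shows "\<And>a. a\<in>Obj M \<Longrightarrow> FO F a \<in> Obj N"
    "\<And>a b f. f \<in> Hom M a b \<Longrightarrow> FM F f \<in> Hom N (FO F a) (FO F b)"
    "\<And>a. a\<in>Obj M \<Longrightarrow> FM F (Id M a) = Id N (FO F a)"
    "\<And>a b c f g. f \<in> Hom M a b \<Longrightarrow> g \<in> Hom M b c \<Longrightarrow>
        FM F (Comp M g f) = Comp N (FM F g) (FM F f)"
    "\<And>a b. a\<in>Obj M \<Longrightarrow> b\<in>Obj M \<Longrightarrow>
        iso_in N (Tens N (FO F a) (FO F b)) (FO F (Tens M a b)) (Phi F a b)"
    "iso_in N (Unit N) (FO F (Unit M)) (Phi0 F)"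
proof -
  note h = fun_all[OF assms]
  show "\<And>a. a\<in>Obj M \<Longrightarrow> FO F a \<in> Obj N" using h(1) by blast
  show "\<And>a b f. f \<in> Hom M a b \<Longrightarrow> FM F f \<in> Hom N (FO F a) (FO F b)" using h(2) by blast
  show "\<And>a. a\<in>Obj M \<Longrightarrow> FM F (Id M a) = Id N (FO F a)" using h(3) by blast
  show "\<And>a b c f g. f \<in> Hom M a b \<Longrightarrow> g \<in> Hom M b c \<Longrightarrow>
        FM F (Comp M g f) = Comp N (FM F g) (FM F f)" using h(4) by blast
  show "\<And>a b. a\<in>Obj M \<Longrightarrow> b\<in>Obj M \<Longrightarrow>
        iso_in N (Tens N (FO F a) (FO F b)) (FO F (Tens M a b)) (Phi F a b)" using h(5) by blast
  show "iso_in N (Unit N) (FO F (Unit M)) (Phi0 F)" by (rule h(6))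
qed
lemma iso_fun:
  assumes M: "category M" and F: "monoidal_functor M N F" and f: "iso_in M a b f"
  shows "iso_in N (FO F a) (FO F b) (FM F f)"
proof -
  note ff = fun_facts[OF F]
  note cf = cat_facts[OF M]
  from f obtain f' where f1: "f \<in> Hom M a b" "f' \<in> Hom M b a" "Comp M f' f = Id M a" "Comp M f f' = Id M b"
    unfolding iso_in_def by blast
  have o: "a \<in> Obj M" "b \<in> Obj M" using cf(1) f1 by blast+
  have "Comp N (FM F f') (FM F f) = Id N (FO F a)" using ff(4)[of f a b f' a] f1 ff(3) o by simp
  moreover have "Comp N (FM F f) (FM F f') = Id N (FO F b)" using ff(4)[of f' b a f b] f1 ff(3) o by simp
  ultimately show ?thesis unfolding iso_in_def using ff(2) f1 by blast
qed

lemma wi_unit: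
  assumes N: "monoidal_cat N" shows "weakly_invertible N (Unit N)"
proof -
  note mf = mon_facts[OF N]
  have "iso_in N (Tens N (Unit N) (Unit N)) (Unit N) (Lam N (Unit N))" by (rule mf(7)[OF mf(2)])
  then show ?thesis unfolding weakly_invertible_def isomorphic_def using mf(2) by blast
qed

lemma wi_of_iso_unit:
  assumes N: "monoidal_cat N" and f: "iso_in N X (Unit N) f"
  shows "weakly_invertible N X"
proof -
  note mf = mon_facts[OF N]
  have X: "X \<in> Obj N" using iso_obj[OF mf(1) f] by blast
  have "iso_in N (Tens N X (Unit N)) (Unit N) (Comp N f (Rho N X))"
    using iso_comp[OF mf(1) mf(8)[OF X] f] .
  moreover have "iso_in N (Tens N (Unit N) X) (Unit N) (Comp N f (Lam N X))"
    using iso_comp[OF mf(1) mf(7)[OF X] f] .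
  ultimately show ?thesis unfolding weakly_invertible_def isomorphic_def using X mf(2) by blast
qed

lemma pure_unique:
  assumes N: "monoidal_cat N" and P: "purely_monoidal N"
    and f: "iso_in N X (Unit N) f" and g: "iso_in N X (Unit N) g"
  shows "f = g"
proof -
  have "\<exists>!h. iso_in N X (Unit N) h"
    using P wi_of_iso_unit[OF N f] wi_unit[OF N] unfolding purely_monoidal_def by blast
  then show ?thesis using f g by blast
qed

theorem lemma6p1:
  fixes M :: "('o,'m) moncat" and N :: "('p,'n) moncat" and F :: "('o,'m,'p,'n) monfun"
  assumes "monoidal_cat M" and "monoidal_cat N" and "monoidal_functor M N F"
    and "purely_monoidal N"
  shows "(\<forall>\<theta>1\<in>Theta M N F. \<forall>\<theta>2\<in>Theta M N F. \<theta>1 = \<theta>2) \<and>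
         (two_group M \<longrightarrow> (\<exists>!\<theta>. \<theta> \<in> Theta M N F))"
proof -
  note M = assms(1) and N = assms(2) and F = assms(3) and P = assms(4)
  note mfM = mon_facts[OF M] and mfN = mon_facts[OF N]
  note cfN = cat_facts[OF mfN(1)] and cfM = cat_facts[OF mfM(1)]
  note ff = fun_facts[OF F]
  have G: "FO (const_unit_functor N) = (\<lambda>_. Unit N)" "FM (const_unit_functor N) = (\<lambda>_. Id N (Unit N))"
    "Phi (const_unit_functor N) = (\<lambda>_ _. Lam N (Unit N))" "Phi0 (const_unit_functor N) = Id N (Unit N)"
    by (simp_all add: const_unit_functor_def)
  have part1: "\<forall>\<theta>1\<in>Theta M N F. \<forall>\<theta>2\<in>Theta M N F. \<theta>1 = \<theta>2"
  proof (intro ballI ext)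
    fix \<theta>1 \<theta>2 a assume t1: "\<theta>1 \<in> Theta M N F" and t2: "\<theta>2 \<in> Theta M N F"
    show "\<theta>1 a = \<theta>2 a"
    proof (cases "a \<in> Obj M")
      case True
      then show ?thesis using t1 t2 pure_unique[OF N P]
        unfolding Theta_def monoidal_nat_iso_def G by auto
    next
      case False
      then show ?thesis using t1 t2 unfolding Theta_def monoidal_nat_iso_def extensional_def by auto
    qed
  qed
  have part2: "\<exists>\<theta>. \<theta> \<in> Theta M N F" if TG: "two_group M"
  proof -
    have gpd: "groupoid M" and wiM: "\<forall>a\<in>Obj M. weakly_invertible M a"
      using TG unfolding two_group_def by auto
    have ex: "\<exists>f. iso_in N (FO F a) (Unit N) f" if a: "a \<in> Obj M" for a
    proof -
      obtain b g1 g2 where b: "b \<in> Obj M" and g1: "iso_in M (Tens M a b) (Unit M) g1"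
        and g2: "iso_in M (Tens M b a) (Unit M) g2"
        using wiM a unfolding weakly_invertible_def isomorphic_def by blast
      obtain h where h: "iso_in N (FO F (Unit M)) (Unit N) h" using iso_inv[OF ff(6)] by blast
      have "iso_in N (Tens N (FO F a) (FO F b)) (Unit N)
              (Comp N h (Comp N (FM F g1) (Phi F a b)))"
        by (rule iso_comp[OF mfN(1) iso_comp[OF mfN(1) ff(5)[OF a b] iso_fun[OF mfM(1) F g1]] h])
      moreover have "iso_in N (Tens N (FO F b) (FO F a)) (Unit N)
              (Comp N h (Comp N (FM F g2) (Phi F b a)))"
        by (rule iso_comp[OF mfN(1) iso_comp[OF mfN(1) ff(5)[OF b a] iso_fun[OF mfM(1) F g2]] h])
      ultimately have "weakly_invertible N (FO F a)"
        unfolding weakly_invertible_def isomorphic_def using ff(1) a b by blast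
      then show ?thesis using P wi_unit[OF N] unfolding purely_monoidal_def by blast
    qed
    define \<theta> where "\<theta> = (\<lambda>a. if a \<in> Obj M then (THE f. iso_in N (FO F a) (Unit N) f) else undefined)"
    have th: "iso_in N (FO F a) (Unit N) (\<theta> a)" if a: "a \<in> Obj M" for a
    proof -
      obtain f where f: "iso_in N (FO F a) (Unit N) f" using ex[OF a] by blast
      have "(THE f. iso_in N (FO F a) (Unit N) f) = f"
        by (rule the_equality[where P="\<lambda>f. iso_in N (FO F a) (Unit N) f", OF f]) (use pure_unique[OF N P _ f] in blast)
      then show ?thesis using f a unfolding \<theta>_def by simp
    qed
    have "monoidal_nat_iso M N F (const_unit_functor N) \<theta>"
      unfolding monoidal_nat_iso_def G
    proof (intro conjI ballI allI impI)
      show "\<theta> \<in> extensional (Obj M)" unfolding \<theta>_def extensional_def by auto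
    next
      fix a assume "a \<in> Obj M" then show "iso_in N (FO F a) (Unit N) (\<theta> a)" by (rule th)
    next
      fix a b f assume f: "f \<in> Hom M a b"
      have o: "a \<in> Obj M" "b \<in> Obj M" using cfM(1) f by blast+
      have fi: "iso_in M a b f" using gpd o f unfolding groupoid_def by blast
      have l: "iso_in N (FO F a) (Unit N) (Comp N (\<theta> b) (FM F f))"
        by (rule iso_comp[OF mfN(1) iso_fun[OF mfM(1) F fi] th[OF o(2)]])
      have "Comp N (Id N (Unit N)) (\<theta> a) = \<theta> a" using cfN(5) iso_hom[OF th[OF o(1)]] by blast
      then show "Comp N (\<theta> b) (FM F f) = Comp N (Id N (Unit N)) (\<theta> a)"
        using pure_unique[OF N P l th[OF o(1)]] by simp
    next
      fix a b assume a: "a \<in> Obj M" and b: "b \<in> Obj M"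
      have l: "iso_in N (Tens N (FO F a) (FO F b)) (Unit N) (Comp N (\<theta> (Tens M a b)) (Phi F a b))"
        by (rule iso_comp[OF mfN(1) ff(5)[OF a b] th[OF mfM(3)[OF a b]]])
      have r: "iso_in N (Tens N (FO F a) (FO F b)) (Unit N) (Comp N (Lam N (Unit N)) (TensM N (\<theta> a) (\<theta> b)))"
        by (rule iso_comp[OF mfN(1) iso_tens[OF N th[OF a] th[OF b]] mfN(7)[OF mfN(2)]])
      show "Comp N (\<theta> (Tens M a b)) (Phi F a b) = Comp N (Lam N (Unit N)) (TensM N (\<theta> a) (\<theta> b))"
        by (rule pure_unique[OF N P l r])
    next
      have l: "iso_in N (Unit N) (Unit N) (Comp N (\<theta> (Unit M)) (Phi0 F))"
        by (rule iso_comp[OF mfN(1) ff(6) th[OF mfM(2)]])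
      show "Comp N (\<theta> (Unit M)) (Phi0 F) = Id N (Unit N)"
        by (rule pure_unique[OF N P l iso_id[OF mfN(1) mfN(2)]])
    qed
    then show ?thesis unfolding Theta_def by blast
  qed
  show ?thesis using part1 part2 by blast
qed

end
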